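(* Let $\rho>3$ be an odd prime. Then $\mathrm{ord}_{4\rho}(3)=\rho-1$ if and only if one of the following holds: (1) $\rho\equiv \pm 5\pmod{12}$ and $\mathrm{ord}_\rho(3)=\rho-1$; (2) $\rho\equiv -1\pmod{12}$ and $\mathrm{ord}_\rho(3)=\frac{\rho-1}{2}$.
   Context: $\mathrm{ord}_M(a)$ denotes the multiplicative order of $a$ modulo $M$. *)

theory Defs
  imports "HOL-Number_Theory.Number_Theory"
begin

end

theory Submission imports Defs "HOL-Number_Theory.Number_Theory" begin

lemma leg_p3:
  fixes p :: nat assumes "prime p" "p > 3"
  shows "Legendre (int p) 3 = (if p mod 3 = 1 then 1 else -1)"
proof -
  have pm: "p mod 3 = 1 \<or> p mod 3 = 2"
  proof -
    have "\<not> 3 dvd p" using assms unfolding prime_nat_iff by force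
    then show ?thesis by presburger
  qed
  have nz: "\<not> [int p = 0] (mod 3)"
    using pm by (simp add: cong_def) presburger
  have sq: "(y::int)^2 mod 3 \<noteq> 2" for y
  proof -
    have "y mod 3 = 0 \<or> y mod 3 = 1 \<or> y mod 3 = 2" by presburger
    moreover have "y^2 mod 3 = (y mod 3)^2 mod 3" by (simp add: power_mod)
    ultimately show ?thesis by auto
  qed
  show ?thesis
  proof (cases "p mod 3 = 1")
    case True
    have "QuadRes 3 (int p)" unfolding QuadRes_def
      by (rule exI[of _ 1]) (use True in \<open>simp add: cong_def; presburger\<close>)
    then show ?thesis using nz True by (simp add: Legendre_def)
  next
    case False
    then have p2: "int p mod 3 = 2" using pm by presburger
    have "\<not> QuadRes 3 (int p)" unfolding QuadRes_def cong_def using sq p2 by auto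
    then show ?thesis using nz False by (simp add: Legendre_def)
  qed
qed

lemma leg_3p:
  fixes p :: nat assumes "prime p" "p > 3"
  shows "Legendre 3 (int p) = -1 \<longleftrightarrow> (p mod 12 = 5 \<or> p mod 12 = 7)"
proof -
  have QR: "Legendre (int p) 3 * Legendre 3 (int p) = (-1::int) ^ ((p - 1) div 2 * ((3 - 1) div 2))"
    using Quadratic_Reciprocity[of p 3] assms by simp
  have nz: "\<not> [3 = 0] (mod (int p))"
  proof
    assume "[3 = 0] (mod (int p))"
    then have "int p dvd 3" by (simp add: cong_0_iff)
    then have "p dvd 3" by presburger
    then show False using assms dvd_imp_le[of p 3] by simp
  qed
  have Lv: "Legendre 3 (int p) = 1 \<or> Legendre 3 (int p) = -1"
    using nz by (simp add: Legendre_def)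
  have pm: "p mod 12 = 1 \<or> p mod 12 = 5 \<or> p mod 12 = 7 \<or> p mod 12 = 11"
  proof -
    have "\<not> 3 dvd p" using assms unfolding prime_nat_iff by force
    moreover have "\<not> 2 dvd p" using assms unfolding prime_nat_iff by force
    ultimately show ?thesis by presburger
  qed
  have e: "((p - 1) div 2) mod 2 = (if p mod 4 = 1 then 0 else 1)" using pm by presburger
  have s: "(-1::int) ^ ((p - 1) div 2) = (if p mod 4 = 1 then 1 else -1)"
    using e by (simp add: minus_one_power_iff even_iff_mod_2_eq_zero split: if_splits)
  have m3: "p mod 3 = 1 \<longleftrightarrow> (p mod 12 = 1 \<or> p mod 12 = 7)" using pm by presburger
  have m4: "p mod 4 = 1 \<longleftrightarrow> (p mod 12 = 1 \<or> p mod 12 = 5)" using pm by presburger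
  have QR': "Legendre (int p) 3 * Legendre 3 (int p) = (-1::int) ^ ((p - 1) div 2)"
    using QR by simp
  show ?thesis
    using pm Lv
  proof (elim disjE)
  qed (use QR' s leg_p3[OF assms] m3 m4 in simp_all)
qed


lemma leg_vals:
  fixes p :: nat assumes "prime p" "p > 3"
  shows "Legendre 3 (int p) = 1 \<or> Legendre 3 (int p) = -1"
proof -
  have nz: "\<not> [3 = 0] (mod (int p))"
  proof
    assume "[3 = 0] (mod (int p))"
    then have "int p dvd 3" by (simp add: cong_0_iff)
    then have "p dvd 3" by presburger
    then show False using assms dvd_imp_le[of p 3] by simp
  qed
  then show ?thesis by (simp add: Legendre_def)
qed

lemma pow3_mod4: "(3::nat)^k mod 4 = (if even k then 1 else 3)"
proof (induction k)
  case 0 then show ?case by simp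
next
  case (Suc k)
  have "(3::nat)^Suc k mod 4 = (3 * (3^k mod 4)) mod 4" by (simp add: mod_mult_right_eq)
  then show ?case using Suc by auto
qed

theorem lemma9:
  fixes \<rho> :: nat
  assumes "prime \<rho>" and "odd \<rho>" and "\<rho> > 3"
  shows "ord (4 * \<rho>) 3 = \<rho> - 1 \<longleftrightarrow>
           (([\<rho> = 5] (mod 12) \<or> [\<rho> = 7] (mod 12)) \<and> ord \<rho> 3 = \<rho> - 1)
         \<or> ([\<rho> = 11] (mod 12) \<and> ord \<rho> 3 = (\<rho> - 1) div 2)"
proof -
  define p where "p = \<rho>"
  have pp: "prime p" "p > 3" "odd p" using assms p_def by auto
  define d where "d = ord p 3"
  define h where "h = (p - 1) div 2"
  have ph: "p - 1 = 2 * h" using pp h_def by auto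
  have n3: "\<not> p dvd 3" using pp dvd_imp_le[of p 3] by auto
  have cop4: "coprime 4 p"
  proof -
    have c2: "coprime 2 p" using pp by simp
    have "coprime (2 * 2) p" unfolding coprime_mult_left_iff using c2 by blast
    moreover have "(2::nat) * 2 = 4" by simp
    ultimately show ?thesis by metis
  qed
  have key: "[3^k = 1] (mod (4 * p)) \<longleftrightarrow> even k \<and> d dvd k" for k
  proof
    assume a: "[3^k = 1] (mod (4 * p))"
    then have "[3^k = 1] (mod (4::nat))" by (rule cong_dvd_modulus_nat) simp
    then have "(3::nat)^k mod 4 = 1" unfolding cong_def by simp
    then have "even k" using pow3_mod4[of k] by (cases "even k") simp_all
    moreover have "[3^k = 1] (mod (p::nat))" using a by (rule cong_dvd_modulus_nat) simp
    ultimately show "even k \<and> d dvd k" using ord_divides d_def by blast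
  next
    assume a: "even k \<and> d dvd k"
    have "[3^k = 1] (mod (4::nat))" using a pow3_mod4[of k] by (simp add: cong_def)
    moreover have "[3^k = 1] (mod (p::nat))" using a ord_divides d_def by blast
    ultimately show "[3^k = 1] (mod (4 * p))" using cop4 coprime_cong_mult_nat by blast
  qed
  have ordiv: "ord (4 * p) 3 dvd k \<longleftrightarrow> even k \<and> d dvd k" for k
    using key ord_divides by blast
  have oeq: "ord (4 * p) 3 = (if even d then d else 2 * d)"
  proof (rule dvd_antisym)
    have "even (if even d then d else 2 * d) \<and> d dvd (if even d then d else 2 * d)"
      by (cases "even d") simp_all
    then show "ord (4 * p) 3 dvd (if even d then d else 2 * d)" using ordiv[of "if even d then d else 2 * d"] by (simp only:)
    have "even (ord (4 * p) 3) \<and> d dvd ord (4 * p) 3" using ordiv[of "ord (4 * p) 3"] by (simp only: dvd_refl simp_thms)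
    then have e2: "2 dvd ord (4 * p) 3" and dd: "d dvd ord (4 * p) 3" by blast+
    show "(if even d then d else 2 * d) dvd ord (4 * p) 3"
    proof (cases "even d")
      case True then show ?thesis using dd by simp
    next
      case False
      then have "coprime 2 d" by simp
      then have "2 * d dvd ord (4 * p) 3" using divides_mult[OF e2 dd] by blast
      then show ?thesis using False by simp
    qed
  qed
  have ddvd: "d dvd p - 1" using fermat_theorem[OF pp(1) n3] ord_divides d_def by blast
  have eul: "[Legendre 3 (int p) = 3 ^ h] (mod (int p))"
    using euler_criterion[of p 3] pp h_def by simp
  have lv: "Legendre 3 (int p) = 1 \<or> Legendre 3 (int p) = -1" using leg_vals pp by blast
  have L3: "Legendre 3 (int p) = -1 \<longleftrightarrow> (p mod 12 = 5 \<or> p mod 12 = 7)" using leg_3p pp by blast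
  have c1: "Legendre 3 (int p) = -1" if "d = p - 1"
  proof (rule ccontr)
    assume "Legendre 3 (int p) \<noteq> -1"
    then have "Legendre 3 (int p) = 1" using lv by blast
    then have "[1 = 3 ^ h] (mod (int p))" using eul by simp
    then have "[int (3 ^ h) = int 1] (mod (int p))" by (simp add: cong_sym)
    then have "[3 ^ h = 1] (mod p)" by (simp only: cong_int_iff)
    then have "d dvd h" unfolding d_def by (simp only: ord_divides)
    moreover have "h > 0" using pp h_def by auto
    ultimately have "d \<le> h" by (simp add: dvd_imp_le)
    then show False using that ph pp by auto
  qed
  have c2: "Legendre 3 (int p) = 1" if "d = h"
  proof -
    have "ord p 3 dvd h" using that d_def by simp
    then have "[3 ^ h = 1] (mod p)" by (simp only: ord_divides)
    then have "[int (3 ^ h) = int 1] (mod (int p))" by (simp only: cong_int_iff)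
    then have "[(3::int) ^ h = 1] (mod (int p))" by simp
    then have e: "[Legendre 3 (int p) = 1] (mod (int p))" by (rule cong_trans[OF eul])
    show ?thesis
    proof (rule ccontr)
      assume "Legendre 3 (int p) \<noteq> 1"
      then have "[-1 = 1] (mod (int p))" using lv e by auto
      then have "int p dvd 2" by (simp add: cong_iff_dvd_diff)
      then have "p dvd 2" by presburger
      then show False using pp dvd_imp_le[of p 2] by simp
    qed
  qed
  have m4: "odd h \<longleftrightarrow> p mod 4 = 3" using ph pp by presburger
  have pm: "p mod 12 = 1 \<or> p mod 12 = 5 \<or> p mod 12 = 7 \<or> p mod 12 = 11"
  proof -
    have "\<not> 3 dvd p" using pp unfolding prime_nat_iff by force
    then show ?thesis using pp(3) by presburger
  qed
  have m12: "p mod 12 = 11 \<longleftrightarrow> (p mod 4 = 3 \<and> p mod 12 \<noteq> 7)" using pm by presburger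
  have main: "ord (4 * p) 3 = p - 1 \<longleftrightarrow>
      ((p mod 12 = 5 \<or> p mod 12 = 7) \<and> d = p - 1) \<or> (p mod 12 = 11 \<and> d = h)"
  proof
    assume a: "ord (4 * p) 3 = p - 1"
    show "((p mod 12 = 5 \<or> p mod 12 = 7) \<and> d = p - 1) \<or> (p mod 12 = 11 \<and> d = h)"
    proof (cases "even d")
      case True
      then have "d = p - 1" using a oeq by simp
      then show ?thesis using c1 L3 by blast
    next
      case False
      then have "d = h" "odd h" using a oeq ph by auto
      then show ?thesis using c2 L3 m4 m12 by auto
    qed
  next
    assume a: "((p mod 12 = 5 \<or> p mod 12 = 7) \<and> d = p - 1) \<or> (p mod 12 = 11 \<and> d = h)"
    then show "ord (4 * p) 3 = p - 1"
    proof
      assume "(p mod 12 = 5 \<or> p mod 12 = 7) \<and> d = p - 1"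
      then have dd: "d = p - 1" by blast
      then have "even d" using ph by simp
      then show ?thesis using oeq dd by simp
    next
      assume b: "p mod 12 = 11 \<and> d = h"
      then have "odd h" using m4 by presburger
      then show ?thesis using oeq ph b by auto
    qed
  qed
  show ?thesis using main unfolding p_def d_def h_def cong_def by simp
qed

end
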